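(* In the reduction instance $NTP([a_j]_{j\in A},W)$, every optimal schedule $S^*$ satisfies, for every $k\in A$, $b_{i_k}\in\{0,a_k\}$, where $b_{i_k}$ is the number of employees bumped by the critical employee $i_k$ in $S^*$.
   Context: Reduction instance. Let $N\ge1$, $A=\{1,\dots,N\}$, positive integers $a_1,\dots,a_N$, positive integer $W\le\sum_{j\in A}a_j$. Set $M=N+\sum_{j\in A}a_j+1$, employees $\mathcal E=\{1,\dots,M\}$ (smaller index = more senior). For $k\in A$: $i_k=k+\sum_{j=1}^{k-1}a_j$ (critical employees), $\mathcal E^S_k=\{i: i_k<i\le i_k+a_k\}$ (stable block), $\mathcal E^S=\bigcup_k\mathcal E^S_k$. Response delays: $r_{i_k}=\sum_{j=1}^{k}a_j$; for $i\in\mathcal E^S_k$, $r_i=\sum_{j=1}^{k-1}a_j$; $r_M=\sum_{j\in A}a_j$. Let $C^*_0=2\sum_j a_j$ and $H=C^*_0-W$. A schedule $S=(s_i,e_i)_{i\in\mathcal E}$ has $s_i\ge0$, $e_i=s_i+r_i$; it is feasible if $s_1\le\dots\le s_M$ and $e_i\le H$ for all $i$. $b_i=|\{j: i<j,\ e_j<e_i\}|$ (potential bumps caused by $i$), $B(S)=\sum_i b_i$. A schedule is optimal if it is feasible and minimizes $B(S)$ among feasible schedules. *)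

theory Defs
  imports Complex_Main
begin

text \<open>Reduction instance NTP([a_j]_{j in A}, W) with A = {1..N}.
  Employees are 1..M; a schedule is given by start times s :: nat => real
  (only values on {1..M} matter); e_i = s_i + r_i.\<close>

definition psum :: "(nat \<Rightarrow> nat) \<Rightarrow> nat \<Rightarrow> nat" where
  "psum a k = (\<Sum>j=1..k. a j)"

definition numEmp :: "nat \<Rightarrow> (nat \<Rightarrow> nat) \<Rightarrow> nat" where
  "numEmp N a = N + psum a N + 1"

definition crit :: "(nat \<Rightarrow> nat) \<Rightarrow> nat \<Rightarrow> nat" where
  "crit a k = k + psum a (k - 1)"

definition stable_block :: "(nat \<Rightarrow> nat) \<Rightarrow> nat \<Rightarrow> nat set" where
  "stable_block a k = {i. crit a k < i \<and> i \<le> crit a k + a k}"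

definition resp :: "nat \<Rightarrow> (nat \<Rightarrow> nat) \<Rightarrow> nat \<Rightarrow> real" where
  "resp N a i =
     (if \<exists>k\<in>{1..N}. i = crit a k
      then real (psum a (THE k. k \<in> {1..N} \<and> i = crit a k))
      else if \<exists>k\<in>{1..N}. i \<in> stable_block a k
      then real (psum a ((THE k. k \<in> {1..N} \<and> i \<in> stable_block a k) - 1))
      else real (psum a N))"

definition horizon :: "nat \<Rightarrow> (nat \<Rightarrow> nat) \<Rightarrow> nat \<Rightarrow> real" where
  "horizon N a W = real (2 * psum a N) - real W"

definition endt :: "nat \<Rightarrow> (nat \<Rightarrow> nat) \<Rightarrow> (nat \<Rightarrow> real) \<Rightarrow> nat \<Rightarrow> real" where
  "endt N a s i = s i + resp N a i"

definition feasible :: "nat \<Rightarrow> (nat \<Rightarrow> nat) \<Rightarrow> nat \<Rightarrow> (nat \<Rightarrow> real) \<Rightarrow> bool" where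
  "feasible N a W s \<longleftrightarrow>
     (\<forall>i\<in>{1..numEmp N a}. 0 \<le> s i) \<and>
     (\<forall>i\<in>{1..numEmp N a}. \<forall>j\<in>{1..numEmp N a}. i \<le> j \<longrightarrow> s i \<le> s j) \<and>
     (\<forall>i\<in>{1..numEmp N a}. endt N a s i \<le> horizon N a W)"

definition bumps :: "nat \<Rightarrow> (nat \<Rightarrow> nat) \<Rightarrow> (nat \<Rightarrow> real) \<Rightarrow> nat \<Rightarrow> nat" where
  "bumps N a s i = card {j \<in> {1..numEmp N a}. i < j \<and> endt N a s j < endt N a s i}"

definition total_bumps :: "nat \<Rightarrow> (nat \<Rightarrow> nat) \<Rightarrow> (nat \<Rightarrow> real) \<Rightarrow> nat" where
  "total_bumps N a s = (\<Sum>i=1..numEmp N a. bumps N a s i)"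

definition optimal :: "nat \<Rightarrow> (nat \<Rightarrow> nat) \<Rightarrow> nat \<Rightarrow> (nat \<Rightarrow> real) \<Rightarrow> bool" where
  "optimal N a W s \<longleftrightarrow> feasible N a W s \<and>
     (\<forall>s'. feasible N a W s' \<longrightarrow> total_bumps N a s \<le> total_bumps N a s')"

end

theory Submission
  imports Defs
begin

lemma psum_mono: "m \<le> n \<Longrightarrow> psum a m \<le> psum a n"
  unfolding psum_def by (rule sum_mono2) auto

lemma psum_step: "k \<ge> 1 \<Longrightarrow> psum a k = psum a (k - 1) + a k"
  unfolding psum_def by (cases k) auto

lemma crit_end: "k \<ge> 1 \<Longrightarrow> crit a k + a k = k + psum a k"
  unfolding crit_def using psum_step[of k a] by simp

lemma sep: "1 \<le> k1 \<Longrightarrow> k1 < k2 \<Longrightarrow> crit a k1 + a k1 < crit a k2"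
proof -
  assume h: "1 \<le> k1" "k1 < k2"
  have "psum a k1 \<le> psum a (k2 - 1)" using h by (intro psum_mono) auto
  thus ?thesis using crit_end[OF h(1), of a] h unfolding crit_def by simp
qed

lemma crit_less: "1 \<le> k1 \<Longrightarrow> k1 < k2 \<Longrightarrow> crit a k1 < crit a k2"
  using sep[of k1 k2 a] by simp

lemma crit_inj: "1 \<le> k1 \<Longrightarrow> 1 \<le> k2 \<Longrightarrow> crit a k1 = crit a k2 \<Longrightarrow> k1 = k2"
  by (metis crit_less less_irrefl linorder_neqE_nat)

lemma crit_not_stable: "1 \<le> k \<Longrightarrow> 1 \<le> k' \<Longrightarrow> crit a k \<notin> stable_block a k'"
proof
  assume h: "1 \<le> k" "1 \<le> k'" "crit a k \<in> stable_block a k'"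
  hence h2: "crit a k' < crit a k" "crit a k \<le> crit a k' + a k'" unfolding stable_block_def by auto
  show False
  proof (cases "k' < k")
    case True thus False using sep[of k' k a] h h2 by simp
  next
    case False
    hence "k \<le> k'" by simp
    thus False using crit_less[of k k' a] h h2 by (cases "k = k'") auto
  qed
qed

lemma stable_unique: "1 \<le> k \<Longrightarrow> 1 \<le> k' \<Longrightarrow> i \<in> stable_block a k \<Longrightarrow> i \<in> stable_block a k' \<Longrightarrow> k = k'"
proof (rule ccontr)
  assume h: "1 \<le> k" "1 \<le> k'" "i \<in> stable_block a k" "i \<in> stable_block a k'" "k \<noteq> k'"
  show False
  proof (cases "k < k'")
    case True thus False using sep[of k k' a] h unfolding stable_block_def by auto
  next
    case False
    hence "k' < k" using h by simp
    thus False using sep[of k' k a] h unfolding stable_block_def by auto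
  qed
qed

lemma resp_crit: "k \<in> {1..N} \<Longrightarrow> resp N a (crit a k) = real (psum a k)"
proof -
  assume h: "k \<in> {1..N}"
  have "(THE k'. k' \<in> {1..N} \<and> crit a k = crit a k') = k"
    using h crit_inj[of k _ a] by (intro the_equality) auto
  thus ?thesis using h unfolding resp_def by auto
qed

lemma resp_stable: "k \<in> {1..N} \<Longrightarrow> i \<in> stable_block a k \<Longrightarrow> resp N a i = real (psum a (k - 1))"
proof -
  assume h: "k \<in> {1..N}" "i \<in> stable_block a k"
  have nc: "\<not> (\<exists>k'\<in>{1..N}. i = crit a k')"
    using h crit_not_stable[of _ k a] by auto
  have "(THE k'. k' \<in> {1..N} \<and> i \<in> stable_block a k') = k"
    using h stable_unique[where a=a and k=k and i=i] by (intro the_equality) auto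
  thus ?thesis using h nc unfolding resp_def by auto
qed

lemma resp_later:
  assumes "k \<in> {1..N}" "crit a k + a k < j"
  shows "resp N a j \<ge> real (psum a k)"
proof (cases "\<exists>k'\<in>{1..N}. j = crit a k'")
  case True
  then obtain k' where k': "k' \<in> {1..N}" "j = crit a k'" by auto
  have "k < k'"
  proof (rule ccontr)
    assume "\<not> k < k'"
    hence "k' \<le> k" by simp
    hence "crit a k' \<le> crit a k" using crit_less[of k' k a] k' by (cases "k' = k") auto
    thus False using assms k' by simp
  qed
  thus ?thesis using resp_crit[OF k'(1), of a] k' psum_mono[of k k' a] by simp
next
  case False
  note nc = False
  show ?thesis
  proof (cases "\<exists>k'\<in>{1..N}. j \<in> stable_block a k'")
    case True
    then obtain k' where k': "k' \<in> {1..N}" "j \<in> stable_block a k'" by auto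
    have "k < k'"
    proof (rule ccontr)
      assume "\<not> k < k'"
      hence "k' \<le> k" by simp
      hence "crit a k' + a k' \<le> crit a k + a k"
        using crit_end[of k' a] crit_end[of k a] psum_mono[of k' k a] k' assms by simp
      thus False using assms k' unfolding stable_block_def by simp
    qed
    thus ?thesis using resp_stable[OF k'] psum_mono[of k "k' - 1" a] by simp
  next
    case False
    hence "resp N a j = real (psum a N)" using nc unfolding resp_def by auto
    thus ?thesis using psum_mono[of k N a] assms by simp
  qed
qed

theorem lemma1:
  fixes N W :: nat and a :: "nat \<Rightarrow> nat" and s :: "nat \<Rightarrow> real" and k :: nat
  assumes "N \<ge> 1"
    and "\<forall>j\<in>{1..N}. a j > 0"
    and "W > 0" and "W \<le> psum a N"
    and "optimal N a W s"
    and "k \<in> {1..N}"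
  shows "bumps N a s (crit a k) \<in> {0, a k}"
proof (rule ccontr)
  assume nb: "bumps N a s (crit a k) \<notin> {0, a k}"
  define c where "c = crit a k"
  define M where "M = numEmp N a"
  define D where "D = stable_block a k"
  define L where "L = c + a k"
  have kN: "k \<in> {1..N}" using assms by simp
  have feas: "feasible N a W s" and opt: "\<And>s'. feasible N a W s' \<Longrightarrow> total_bumps N a s \<le> total_bumps N a s'"
    using assms(5) unfolding optimal_def by auto
  have nonneg: "\<And>i. i \<in> {1..M} \<Longrightarrow> 0 \<le> s i"
    and mono: "\<And>i j. i \<in> {1..M} \<Longrightarrow> j \<in> {1..M} \<Longrightarrow> i \<le> j \<Longrightarrow> s i \<le> s j"
    and hor: "\<And>i. i \<in> {1..M} \<Longrightarrow> endt N a s i \<le> horizon N a W"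
    using feas unfolding feasible_def M_def by auto
  have c1: "1 \<le> c" using kN unfolding c_def crit_def by simp
  have LM: "L < M" using kN crit_end[of k a] psum_mono[of k N a]
    unfolding L_def c_def M_def numEmp_def by simp
  have D_eq: "D = {c<..L}" unfolding D_def stable_block_def L_def c_def by auto
  have Pk: "real (psum a k) = real (psum a (k - 1)) + real (a k)"
    using psum_step[of k a] kN by simp
  have ec: "endt N a s c = s c + real (psum a k)"
    unfolding endt_def c_def using resp_crit[OF kN] by simp
  have eD: "\<And>j. j \<in> D \<Longrightarrow> resp N a j = real (psum a (k - 1))"
    unfolding D_def using resp_stable[OF kN] by simp
  have eL: "\<And>j. L < j \<Longrightarrow> resp N a j \<ge> real (psum a k)"
    unfolding L_def c_def using resp_later[OF kN] by simp
  have inM: "\<And>j. j \<in> D \<Longrightarrow> j \<in> {1..M}" using D_eq c1 LM by auto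
  have sL: "s L \<ge> s c + a k"
  proof (rule ccontr)
    assume "\<not> s L \<ge> s c + a k"
    hence lt: "s L < s c + a k" by simp
    have "{j \<in> {1..M}. c < j \<and> endt N a s j < endt N a s c} = D"
    proof
      show "{j \<in> {1..M}. c < j \<and> endt N a s j < endt N a s c} \<subseteq> D"
      proof
        fix j assume j: "j \<in> {j \<in> {1..M}. c < j \<and> endt N a s j < endt N a s c}"
        show "j \<in> D"
        proof (rule ccontr)
          assume "j \<notin> D"
          hence "L < j" using j D_eq by auto
          hence "resp N a j \<ge> real (psum a k)" by (rule eL)
          moreover have "s c \<le> s j" using j c1 by (intro mono) auto
          ultimately show False using j ec unfolding endt_def by simp
        qed
      qed
    next
      show "D \<subseteq> {j \<in> {1..M}. c < j \<and> endt N a s j < endt N a s c}"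
      proof
        fix j assume j: "j \<in> D"
        have "s j \<le> s L" using j D_eq LM c1 by (intro mono) auto
        thus "j \<in> {j \<in> {1..M}. c < j \<and> endt N a s j < endt N a s c}"
          using j inM[OF j] D_eq eD[OF j] ec lt Pk unfolding endt_def by auto
      qed
    qed
    hence "bumps N a s c = card D" unfolding bumps_def M_def by simp
    also have "card D = a k" unfolding D_eq L_def by simp
    finally show False using nb unfolding c_def by simp
  qed
  define s' where "s' = (\<lambda>j. if j \<in> D then max (s j) (s c + a k) else s j)"
  have s'ge: "\<And>j. s j \<le> s' j" unfolding s'_def by auto
  have e'ge: "\<And>j. endt N a s j \<le> endt N a s' j" using s'ge unfolding endt_def by simp
  have out_eq: "\<And>j. j \<notin> D \<Longrightarrow> s' j = s j" unfolding s'_def by simp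
  have later: "\<And>j. j \<in> {1..M} \<Longrightarrow> j \<notin> D \<Longrightarrow> c < j \<Longrightarrow> L < j" using D_eq by auto
  have sjL: "\<And>j. j \<in> {1..M} \<Longrightarrow> L < j \<Longrightarrow> s c + a k \<le> s j"
  proof -
    fix j assume j: "j \<in> {1..M}" "L < j"
    have "L \<in> {1..M}" using LM c1 unfolding L_def by simp
    hence "s L \<le> s j" using mono j by simp
    thus "s c + a k \<le> s j" using sL by simp
  qed
  have feas': "feasible N a W s'"
    unfolding feasible_def
  proof (intro conjI ballI impI)
    fix i assume "i \<in> {1..numEmp N a}"
    thus "0 \<le> s' i" using nonneg s'ge[of i] unfolding M_def by force
  next
    fix i j assume i: "i \<in> {1..numEmp N a}" and j: "j \<in> {1..numEmp N a}" and ij: "i \<le> j"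
    have sij: "s i \<le> s j" using mono i j ij unfolding M_def by simp
    show "s' i \<le> s' j"
    proof (cases "i \<in> D")
      case True
      show ?thesis
      proof (cases "j \<in> D")
        case True then show ?thesis using \<open>i \<in> D\<close> sij unfolding s'_def by auto
      next
        case False
        have "L < j" using later[of j] j False \<open>i \<in> D\<close> ij D_eq unfolding M_def by auto
        hence "s c + a k \<le> s j" using sjL j unfolding M_def by simp
        thus ?thesis using True False sij unfolding s'_def by auto
      qed
    next
      case False
      thus ?thesis using sij s'ge[of j] out_eq[of i] by simp
    qed
  next
    fix i assume i: "i \<in> {1..numEmp N a}"
    show "endt N a s' i \<le> horizon N a W"
    proof (cases "i \<in> D \<and> s i < s c + a k")
      case True
      hence "endt N a s' i = endt N a s c" using eD[of i] ec Pk unfolding endt_def s'_def by auto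
      thus ?thesis using hor[of c] c1 LM unfolding L_def by simp
    next
      case False
      hence "s' i = s i" unfolding s'_def by auto
      thus ?thesis using hor[of i] i unfolding endt_def M_def by simp
    qed
  qed
  have le: "\<And>i. i \<in> {1..M} \<Longrightarrow> bumps N a s' i \<le> bumps N a s i"
  proof -
    fix i assume i: "i \<in> {1..M}"
    show "bumps N a s' i \<le> bumps N a s i"
    proof (cases "i \<in> D")
      case False
      have "{j \<in> {1..M}. i < j \<and> endt N a s' j < endt N a s' i}
            \<subseteq> {j \<in> {1..M}. i < j \<and> endt N a s j < endt N a s i}"
      proof
        fix j assume j: "j \<in> {j \<in> {1..M}. i < j \<and> endt N a s' j < endt N a s' i}"
        have "endt N a s j \<le> endt N a s' j" by (rule e'ge)
        moreover have "endt N a s' i = endt N a s i" using out_eq[OF False] unfolding endt_def by simp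
        ultimately show "j \<in> {j \<in> {1..M}. i < j \<and> endt N a s j < endt N a s i}" using j by auto
      qed
      thus ?thesis unfolding bumps_def M_def[symmetric] by (intro card_mono) auto
    next
      case True
      have "{j \<in> {1..M}. i < j \<and> endt N a s' j < endt N a s' i} = {}"
      proof (rule ccontr)
        assume "{j \<in> {1..M}. i < j \<and> endt N a s' j < endt N a s' i} \<noteq> {}"
        then obtain j where j: "j \<in> {1..M}" "i < j" "endt N a s' j < endt N a s' i" by blast
        have sij: "s i \<le> s j" using mono i j by simp
        show False
        proof (cases "j \<in> D")
          case True
          hence "s' i \<le> s' j" using \<open>i \<in> D\<close> sij unfolding s'_def by auto
          thus False using j eD[OF True] eD[OF \<open>i \<in> D\<close>] unfolding endt_def by simp
        next
          case False
          have "L < j" using later[of j] j False \<open>i \<in> D\<close> D_eq by auto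
          hence r: "resp N a j \<ge> real (psum a k)" and sj: "s c + a k \<le> s j"
            using eL sjL j by auto
          have "s' i \<le> s' j" using sj sij out_eq[OF False] \<open>i \<in> D\<close> unfolding s'_def by auto
          moreover have "real (psum a (k-1)) \<le> real (psum a k)" using psum_mono[of "k-1" k a] by simp
          ultimately show False using j r eD[OF \<open>i \<in> D\<close>] unfolding endt_def by simp
        qed
      qed
      hence "bumps N a s' i = 0" unfolding bumps_def M_def[symmetric] by (simp only: card.empty)
      thus ?thesis by simp
    qed
  qed
  have cnot: "c \<notin> D" using D_eq by simp
  have z: "bumps N a s' c = 0"
  proof -
    have "{j \<in> {1..M}. c < j \<and> endt N a s' j < endt N a s' c} = {}"
    proof (rule ccontr)
      assume "{j \<in> {1..M}. c < j \<and> endt N a s' j < endt N a s' c} \<noteq> {}"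
      then obtain j where j: "j \<in> {1..M}" "c < j" "endt N a s' j < endt N a s' c" by blast
      have ec': "endt N a s' c = s c + real (psum a k)" using ec out_eq[OF cnot] unfolding endt_def by simp
      show False
      proof (cases "j \<in> D")
        case True
        hence "s c + a k \<le> s' j" unfolding s'_def by auto
        thus False using j ec' eD[OF True] Pk unfolding endt_def by simp
      next
        case False
        have "L < j" using later[of j] j False by auto
        hence "resp N a j \<ge> real (psum a k)" "s c + a k \<le> s j" using eL sjL j by auto
        moreover have "s c \<le> s c + a k" by simp
        ultimately show False using j ec' out_eq[OF False] unfolding endt_def by simp
      qed
    qed
    thus ?thesis unfolding bumps_def M_def[symmetric] by (simp only: card.empty)
  qed
  have pos: "bumps N a s c > 0" using nb unfolding c_def by simp
  have cM: "c \<in> {1..M}" using c1 LM unfolding L_def by simp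
  have "total_bumps N a s' < total_bumps N a s"
    unfolding total_bumps_def M_def[symmetric]
    proof (rule sum_strict_mono_ex1)
    show "\<exists>x\<in>{1..M}. bumps N a s' x < bumps N a s x" using z pos cM by (intro bexI[of _ c]) auto
  qed (use le in auto)
  thus False using opt[OF feas'] by simp
qed

end
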